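(* Let $L \ge N$, let $\mathbf{T} \in \mathbb{R}^{L\times N}$ have full rank $N$, and let $\gamma>0$. Define the set-valued map $H:\mathbb{R}^N\rightrightarrows\mathbb{R}^N$ by $\mathbf{y}\in H(\mathbf{x})$ if and only if $\mathbf{x} = \mathbf{T}^{\dagger}S_\gamma\mathbf{T}(\mathbf{x}+\mathbf{y})$. Equip $\mathbb{R}^N$ with the scalar product $\langle\mathbf{x},\mathbf{y}\rangle_{\mathbf{T}} := \mathbf{x}^T\mathbf{T}^*\mathbf{T}\mathbf{y}$. Then $H$ is cyclically monotone with respect to $\langle\cdot,\cdot\rangle_{\mathbf{T}}$: for every integer $m\ge 2$, all $\mathbf{x}_1,\dots,\mathbf{x}_m\in\mathbb{R}^N$ and all $\mathbf{y}_i\in H(\mathbf{x}_i)$, $i=1,\dots,m$, $$\langle \mathbf{x}_2-\mathbf{x}_1,\mathbf{y}_1\rangle_{\mathbf{T}} + \langle \mathbf{x}_3-\mathbf{x}_2,\mathbf{y}_2\rangle_{\mathbf{T}} + \cdots + \langle \mathbf{x}_1-\mathbf{x}_m,\mathbf{y}_m\rangle_{\mathbf{T}} \le 0.$$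
   Context: $\mathbf{T}^*$ is the transpose of $\mathbf{T}$, $\mathbf{T}^{\dagger}=(\mathbf{T}^*\mathbf{T})^{-1}\mathbf{T}^*$ its Moore–Penrose inverse. $S_\gamma:\mathbb{R}^L\to\mathbb{R}^L$ is componentwise soft shrinkage: $[S_\gamma(\mathbf{y})]_j = y_j-\gamma$ if $y_j\ge\gamma$, $y_j+\gamma$ if $y_j\le-\gamma$, $0$ if $|y_j|<\gamma$. *)

theory Defs
  imports "HOL-Analysis.Analysis"
begin

definition soft_shrink :: "real \<Rightarrow> real^'l \<Rightarrow> real^'l" where
  "soft_shrink g y = (\<chi> j. if y $ j \<ge> g then y $ j - g
                          else if y $ j \<le> - g then y $ j + g else 0)"

definition mp_inv :: "real^'n^'l \<Rightarrow> real^'l^'n" where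
  "mp_inv T = matrix_inv (transpose T ** T) ** transpose T"

definition H_map :: "real^'n^'l \<Rightarrow> real \<Rightarrow> real^'n \<Rightarrow> (real^'n) set" where
  "H_map T g x = {y. x = mp_inv T *v soft_shrink g (T *v (x + y))}"

definition inner_T :: "real^'n^'l \<Rightarrow> real^'n \<Rightarrow> real^'n \<Rightarrow> real" where
  "inner_T T x y = x \<bullet> ((transpose T ** T) *v y)"

end

theory Submission
  imports Defs
begin

definition psi1 :: "real \<Rightarrow> real \<Rightarrow> real" where
  "psi1 g t = (if t \<ge> g then (t-g)^2/2 else if t \<le> -g then (t+g)^2/2 else 0)"
definition s1 :: "real \<Rightarrow> real \<Rightarrow> real" where
  "s1 g t = (if t \<ge> g then t-g else if t \<le> -g then t+g else 0)"

lemma scalar_ineq: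
  assumes "g > 0"
  shows "psi1 g b + s1 g b * (a - b) + (s1 g a - s1 g b)^2/2 \<le> psi1 g a"
proof -
  have c1: "b \<ge> g \<Longrightarrow> a < g \<Longrightarrow> 0 \<le> (b-g)*(g-a)" by simp
  have c2: "b \<ge> g \<Longrightarrow> g*g \<le> b*g" using assms by (simp add: mult_right_mono)
  have c3: "b \<le> -g \<Longrightarrow> a > -g \<Longrightarrow> 0 \<le> (-b-g)*(a+g)" by simp
  have c4: "b \<le> -g \<Longrightarrow> b*g \<le> -g*g" using assms by (metis minus_mult_left mult_right_mono less_eq_real_def)
  show ?thesis
  proof (cases "g \<le> b")
    case True
    then show ?thesis using c1 c2 assms unfolding psi1_def s1_def
      by (cases "g \<le> a"; cases "a \<le> -g") (auto simp: power2_eq_square field_simps)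
  next
    case F: False
    show ?thesis
    proof (cases "b \<le> -g")
      case True
      then show ?thesis using F c3 c4 assms unfolding psi1_def s1_def
        by (cases "g \<le> a"; cases "a \<le> -g") (auto simp: power2_eq_square field_simps)
    next
      case False
      then show ?thesis using F assms unfolding psi1_def s1_def
        by (cases "g \<le> a"; cases "a \<le> -g") (auto simp: power2_eq_square field_simps)
    qed
  qed
qed

lemma inner_T_left: "(T *v c) \<bullet> w = c \<bullet> (transpose T *v w)" for T :: "real^'n^'l"
  by (metis dot_lmul_matrix inner_commute transpose_matrix_vector)

lemma invertible_TT:
  fixes T :: "real^'n^'l"
  assumes "rank T = CARD('n)"
  shows "invertible (transpose T ** T)"
proof -
  have inj: "inj ((*v) T)" using assms full_rank_injective by blast
  have "inj ((*v) (transpose T ** T))"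
  proof (rule linear_injective_0[THEN iffD2])
    show "linear ((*v) (transpose T ** T))" by simp
    show "\<forall>c. (transpose T ** T) *v c = 0 \<longrightarrow> c = 0"
    proof (intro allI impI)
      fix c assume "(transpose T ** T) *v c = 0"
      then have "(T *v c) \<bullet> (T *v c) = 0"
        by (simp add: inner_T_left matrix_vector_mul_assoc)
      then have "T *v c = 0" by simp
      then show "c = 0" using inj by (metis inj_eq matrix_vector_mult_0_right)
    qed
  qed
  then show ?thesis
    using matrix_left_invertible_injective invertible_left_inverse by blast
qed


definition psiv :: "real \<Rightarrow> real^'l \<Rightarrow> real" where
  "psiv g v = (\<Sum>j\<in>UNIV. psi1 g (v $ j))"

lemma vec_ineq:
  fixes a b :: "real^'l"
  assumes "g > 0"
  shows "psiv g b + soft_shrink g b \<bullet> (a - b) + (norm (soft_shrink g a - soft_shrink g b))^2/2 \<le> psiv g a"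
proof -
  have sj: "soft_shrink g v $ j = s1 g (v $ j)" for v :: "real^'l" and j
    by (simp add: soft_shrink_def s1_def)
  have nv: "(norm v)^2 = (\<Sum>j\<in>UNIV. (v$j)^2)" for v :: "real^'l"
    unfolding power2_norm_eq_inner by (simp add: inner_vec_def power2_eq_square)
  have "psiv g b + soft_shrink g b \<bullet> (a - b) + (norm (soft_shrink g a - soft_shrink g b))^2/2
     = (\<Sum>j\<in>UNIV. psi1 g (b$j) + s1 g (b$j) * (a$j - b$j) + (s1 g (a$j) - s1 g (b$j))^2/2)"
    by (simp add: psiv_def inner_vec_def nv sj sum.distrib sum_divide_distrib)
  also have "\<dots> \<le> (\<Sum>j\<in>UNIV. psi1 g (a$j))"
    by (rule sum_mono) (rule scalar_ineq[OF assms])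
  finally show ?thesis by (simp add: psiv_def)
qed

lemma sum_cyclic:
  fixes f :: "nat \<Rightarrow> real"
  assumes "m > 0"
  shows "(\<Sum>i<m. f (Suc i mod m)) = (\<Sum>i<m. f i)"
proof -
  obtain k where m: "m = Suc k" using assms gr0_implies_Suc by blast
  have "(\<Sum>i<m. f (Suc i mod m)) = (\<Sum>i<k. f (Suc i mod m)) + f 0"
    by (simp add: m)
  also have "(\<Sum>i<k. f (Suc i mod m)) = (\<Sum>i<k. f (Suc i))"
    by (rule sum.cong) (auto simp: m)
  also have "(\<Sum>i<k. f (Suc i)) + f 0 = (\<Sum>i<m. f i)"
    unfolding m sum.lessThan_Suc_shift by simp
  finally show ?thesis .
qed

lemma proj_props:
  fixes T :: "real^'n^'l"
  assumes "rank T = CARD('n)"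
  shows "(T *v c) \<bullet> (T *v (mp_inv T *v w)) = (T *v c) \<bullet> w"
    and "norm (T *v (mp_inv T *v w)) \<le> norm w"
proof -
  define A where "A = transpose T ** T"
  define M where "M = matrix_inv A"
  have AM: "A ** M = mat 1"
    using invertible_TT[OF assms] unfolding M_def A_def invertible_def matrix_inv_def
    by (metis (mono_tags, lifting) someI_ex)
  have mp: "mp_inv T = M ** transpose T" by (simp add: mp_inv_def M_def A_def)
  have Q1: "(T *v c) \<bullet> (T *v (mp_inv T *v w)) = (T *v c) \<bullet> w" for c w
  proof -
    have e1: "T *v (mp_inv T *v w) = T *v (M *v (transpose T *v w))"
      by (simp only: mp matrix_vector_mul_assoc)
    have e2: "(T *v c) \<bullet> (T *v z) = c \<bullet> (A *v z)" for z
      by (simp only: inner_T_left A_def matrix_vector_mul_assoc)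
    have e3: "A *v (M *v v) = v" for v
      by (simp only: matrix_vector_mul_assoc AM matrix_vector_mul_lid)
    have "(T *v c) \<bullet> (T *v (mp_inv T *v w)) = c \<bullet> (transpose T *v w)"
      by (simp only: e1 e2 e3)
    also have "\<dots> = (T *v c) \<bullet> w" by (simp only: inner_T_left)
    finally show ?thesis .
  qed
  then show "(T *v c) \<bullet> (T *v (mp_inv T *v w)) = (T *v c) \<bullet> w" .
  let ?q = "T *v (mp_inv T *v w)"
  have "norm ?q ^ 2 = ?q \<bullet> w"
    using Q1[of "mp_inv T *v w" w] by (simp add: power2_norm_eq_inner)
  also have "\<dots> \<le> norm ?q * norm w" by (rule norm_cauchy_schwarz)
  finally have "norm ?q ^ 2 \<le> norm ?q * norm w" .
  then show "norm ?q \<le> norm w"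
    by (metis mult_le_cancel_left_pos norm_ge_zero power2_eq_square less_eq_real_def mult_zero_left order_trans)
qed


theorem theorem3p4:
  fixes T :: "real^'n^'l" and g :: real
    and m :: nat and x y :: "nat \<Rightarrow> real^'n"
  assumes "CARD('l) \<ge> CARD('n)"
    and "rank T = CARD('n)"
    and "g > 0"
    and "m \<ge> 2"
    and "\<And>i. i < m \<Longrightarrow> y i \<in> H_map T g (x i)"
  shows "(\<Sum>i<m. inner_T T (x (Suc i mod m) - x i) (y i)) \<le> 0"
proof -
  define a where "a i = T *v (x i + y i)" for i
  define u where "u i = T *v x i" for i
  define w where "w i = soft_shrink g (a i)" for i
  define G where "G i = a i \<bullet> u i - psiv g (a i) - (norm (u i))^2/2" for i
  have uw: "u i = T *v (mp_inv T *v w i)" if "i < m" for i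
    using assms(5)[OF that] by (simp add: H_map_def u_def w_def a_def)
  have Ty: "T *v y i = a i - u i" for i
    by (simp add: a_def u_def matrix_vector_right_distrib)
  have step: "inner_T T (x j - x i) (y i) \<le> G j - G i" if "i < m" "j < m" for i j
  proof -
    have "inner_T T (x j - x i) (y i) = (u j - u i) \<bullet> (a i - u i)"
    proof -
      have "inner_T T (x j - x i) (y i) = (x j - x i) \<bullet> (transpose T *v (T *v y i))"
        unfolding inner_T_def by (simp only: matrix_vector_mul_assoc)
      also have "\<dots> = (T *v (x j - x i)) \<bullet> (T *v y i)"
        by (simp only: inner_T_left)
      also have "\<dots> = (u j - u i) \<bullet> (a i - u i)"
        by (simp only: Ty u_def matrix_vector_mult_diff_distrib)
      finally show ?thesis .
    qed
    also have "\<dots> = G j - G i - (psiv g (a i) - psiv g (a j) - (a i - a j) \<bullet> u j - (norm (u i - u j))^2/2)"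
      unfolding G_def
      by (simp add: power2_norm_eq_inner inner_diff_left inner_diff_right inner_commute algebra_simps; simp add: field_simps)
    also have "\<dots> \<le> G j - G i"
    proof -
      have c: "a i - a j = T *v ((x i + y i) - (x j + y j))"
        by (simp add: a_def matrix_vector_mult_diff_distrib)
      have e1: "(a i - a j) \<bullet> u j = (a i - a j) \<bullet> w j"
        unfolding uw[OF that(2)] c by (rule proj_props(1)[OF assms(2)])
      have "u i - u j = T *v (mp_inv T *v (w i - w j))"
        by (simp add: uw that matrix_vector_mult_diff_distrib)
      then have "norm (u i - u j) \<le> norm (w i - w j)"
        using proj_props(2)[OF assms(2)] by simp
      then have e2: "(norm (u i - u j))^2 \<le> (norm (w i - w j))^2"
        by (simp add: power_mono)
      have v: "psiv g (a j) + w j \<bullet> (a i - a j) + (norm (w i - w j))^2/2 \<le> psiv g (a i)"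
        unfolding w_def by (rule vec_ineq[OF assms(3)])
      have v': "psiv g (a j) + (a i - a j) \<bullet> w j + (norm (w i - w j))^2/2 \<le> psiv g (a i)"
        using v by (simp only: inner_commute)
      show ?thesis using e1 e2 v' by linarith
    qed
    finally show ?thesis .
  qed
  have "(\<Sum>i<m. inner_T T (x (Suc i mod m) - x i) (y i)) \<le> (\<Sum>i<m. G (Suc i mod m) - G i)"
    by (rule sum_mono) (rule step; use assms(4) in auto)
  also have "\<dots> = 0"
    using assms(4) by (simp add: sum_subtractf sum_cyclic)
  finally show ?thesis .
qed

end
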